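(* Consider the coordination game ($\mathcal V_c=\mathcal V$). (1) If $x^*$ is a Nash equilibrium and $z^*=z(x^* )$, then $z^*=F_c\!\left(\frac{n}{n-1}(z^*-\epsilon_c)\right)$ for every $\epsilon_c\in(0,\tfrac1n]$. (2) Conversely, if $z^*\in\{0,\tfrac1n,\dots,1\}$ satisfies $z^*=F_c\!\left(\frac{n}{n-1}(z^*-\epsilon_c)\right)$ for every $\epsilon_c\in(0,\tfrac1n]$, then there exists a Nash equilibrium $x^*$ with $z(x^* )=z^*$.
   Context: Let $\mathcal V$ be a finite set of $n\ge2$ agents, all coordinating. Given real weights $d_i$, the coordination game has action set $\{-1,+1\}$, configuration space $\mathcal X=\{-1,+1\}^{\mathcal V}$ and utilities $u_i(x)=\sum_{j\neq i}x_ix_j-d_ix_i$. A (pure) Nash equilibrium is an $x\in\mathcal X$ with $u_i(x)\ge u_i(y_i,x_{-i})$ for all $i$ and $y_i\in\{-1,+1\}$. Thresholds: $r_i=\tfrac12+\tfrac{d_i}{2(n-1)}$. For $x\in\mathcal X$, $z(x)=\frac1n|\{i: x_i=+1\}|$. The threshold CDF is $F_c(t)=\frac1n|\{i\in\mathcal V: r_i\le t\}|$, $t\in\mathbb R$. *)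

theory Defs
  imports "HOL-Library.FuncSet" Complex_Main
begin

definition configs :: "'a set \<Rightarrow> ('a \<Rightarrow> real) set" where
  "configs V = V \<rightarrow>\<^sub>E {-1, 1}"

definition utility :: "'a set \<Rightarrow> ('a \<Rightarrow> real) \<Rightarrow> 'a \<Rightarrow> ('a \<Rightarrow> real) \<Rightarrow> real" where
  "utility V d i x = (\<Sum>j\<in>V - {i}. x i * x j) - d i * x i"

definition nash_eq :: "'a set \<Rightarrow> ('a \<Rightarrow> real) \<Rightarrow> ('a \<Rightarrow> real) \<Rightarrow> bool" where
  "nash_eq V d x \<longleftrightarrow> x \<in> configs V \<and>
     (\<forall>i\<in>V. \<forall>y\<in>{-1, 1::real}. utility V d i x \<ge> utility V d i (x(i := y)))"

definition threshold :: "'a set \<Rightarrow> ('a \<Rightarrow> real) \<Rightarrow> 'a \<Rightarrow> real" where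
  "threshold V d i = 1/2 + d i / (2 * (real (card V) - 1))"

definition zfrac :: "'a set \<Rightarrow> ('a \<Rightarrow> real) \<Rightarrow> real" where
  "zfrac V x = real (card {i\<in>V. x i = 1}) / real (card V)"

definition Fc :: "'a set \<Rightarrow> ('a \<Rightarrow> real) \<Rightarrow> real \<Rightarrow> real" where
  "Fc V d t = real (card {i\<in>V. threshold V d i \<le> t}) / real (card V)"

end

theory Submission
  imports Defs
begin

lemma sumx:
  assumes "finite V" "x \<in> configs V"
  shows "(\<Sum>j\<in>V. x j) = 2 * real (card {i\<in>V. x i = 1}) - real (card V)"
proof -
  let ?P = "{i\<in>V. x i = 1}"
  have sub: "?P \<subseteq> V" by auto
  have "(\<Sum>j\<in>V. x j) = (\<Sum>j\<in>V-?P. x j) + (\<Sum>j\<in>?P. x j)"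
    by (rule sum.subset_diff[OF sub assms(1)])
  moreover have "(\<Sum>j\<in>?P. x j) = real (card ?P)" by simp
  moreover have "(\<Sum>j\<in>V-?P. x j) = (\<Sum>j\<in>V-?P. -1)"
    using assms(2) unfolding configs_def by (intro sum.cong) (auto simp: PiE_iff)
  moreover have "card (V - ?P) = card V - card ?P"
    using card_Diff_subset[OF finite_subset[OF sub assms(1)] sub] by simp
  moreover have "card ?P \<le> card V" using card_mono[OF assms(1) sub] .
  ultimately show ?thesis by (simp add: of_nat_diff)
qed

lemma udiff:
  assumes "finite V" "i \<in> V"
  shows "utility V d i x - utility V d i (x(i:=y)) = (x i - y) * ((\<Sum>j\<in>V-{i}. x j) - d i)"
proof -
  have "(\<Sum>j\<in>V-{i}. (x(i:=y)) i * (x(i:=y)) j) = (\<Sum>j\<in>V-{i}. y * x j)"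
    by (intro sum.cong) auto
  also have "\<dots> = y * (\<Sum>j\<in>V-{i}. x j)" by (simp add: sum_distrib_left)
  finally have h: "(\<Sum>j\<in>V-{i}. (x(i:=y)) i * (x(i:=y)) j) = y * (\<Sum>j\<in>V-{i}. x j)" .
  have h2: "(\<Sum>j\<in>V-{i}. x i * x j) = x i * (\<Sum>j\<in>V-{i}. x j)" by (simp add: sum_distrib_left)
  show ?thesis unfolding utility_def h h2 by (simp add: algebra_simps)
qed

lemma thr1:
  fixes N m dd :: real assumes "N > 0"
  shows "(1/2 + dd / (2 * N) \<le> (m - 1) / N) \<longleftrightarrow> dd \<le> 2 * m - N - 2"
proof -
  have e1: "1/2 + dd / (2 * N) = (N + dd) / (2 * N)" using assms by (simp add: field_simps)
  have e2: "(m - 1) / N = (2 * (m - 1)) / (2 * N)"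
    by (rule mult_divide_mult_cancel_left[symmetric]) simp
  have e3: "(N + dd) / (2 * N) \<le> (2 * (m - 1)) / (2 * N) \<longleftrightarrow> N + dd \<le> 2 * (m - 1)"
    apply (subst divide_le_cancel) using assms by auto
  show ?thesis unfolding e1 e2 e3 by (auto simp: algebra_simps)
qed

lemma thr2:
  fixes N m dd :: real assumes "N > 0"
  shows "(1/2 + dd / (2 * N) \<ge> m / N) \<longleftrightarrow> dd \<ge> 2 * m - N"
proof -
  have e1: "1/2 + dd / (2 * N) = (N + dd) / (2 * N)" using assms by (simp add: field_simps)
  have e2: "m / N = (2 * m) / (2 * N)"
    by (rule mult_divide_mult_cancel_left[symmetric]) simp
  have e3: "(2 * m) / (2 * N) \<le> (N + dd) / (2 * N) \<longleftrightarrow> 2 * m \<le> N + dd"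
    apply (subst divide_le_cancel) using assms by auto
  show ?thesis unfolding e1 e2 e3 by (auto simp: algebra_simps)
qed

lemma agent_char:
  assumes "finite V" "card V \<ge> 2" "x \<in> configs V" "i \<in> V"
  shows "(\<forall>y\<in>{-1, 1::real}. utility V d i x \<ge> utility V d i (x(i := y))) \<longleftrightarrow>
    (if x i = 1 then threshold V d i \<le> (real (card {i\<in>V. x i = 1}) - 1) / (real (card V) - 1)
     else threshold V d i \<ge> real (card {i\<in>V. x i = 1}) / (real (card V) - 1))"
proof -
  let ?m = "real (card {i\<in>V. x i = 1})"
  let ?n = "real (card V)"
  have xi: "x i = 1 \<or> x i = -1" using assms(3,4) unfolding configs_def by (auto simp: PiE_iff)
  have S: "(\<Sum>j\<in>V-{i}. x j) = 2 * ?m - ?n - x i"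
    using sumx[OF assms(1,3)] sum.remove[OF assms(1,4), of x] by simp
  have N: "?n - 1 > 0" using assms(2) by simp
  have eq: "(\<forall>y\<in>{-1, 1::real}. utility V d i x \<ge> utility V d i (x(i := y))) \<longleftrightarrow>
      (\<forall>y\<in>{-1, 1::real}. (x i - y) * (2 * ?m - ?n - x i - d i) \<ge> 0)"
    using udiff[OF assms(1,4), of d x] S by (smt (verit))
  show ?thesis
  proof (cases "x i = 1")
    case True
    have "threshold V d i \<le> (?m - 1) / (?n - 1) \<longleftrightarrow> d i \<le> 2 * ?m - ?n - 1"
      using thr1[OF N, where m="?m" and dd="d i"] unfolding threshold_def by (smt (verit))
    then show ?thesis using eq True by auto
  next
    case False
    then have F: "x i = -1" using xi by auto
    have "threshold V d i \<ge> ?m / (?n - 1) \<longleftrightarrow> d i \<ge> 2 * ?m - ?n + 1"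
      using thr2[OF N, where m="?m" and dd="d i"] unfolding threshold_def by (smt (verit))
    then show ?thesis using eq F by auto
  qed
qed

theorem corollary1:
  fixes V :: "'a set" and d :: "'a \<Rightarrow> real"
  assumes "finite V" and "card V \<ge> 2"
  shows "(\<forall>x. nash_eq V d x \<longrightarrow>
            (\<forall>\<epsilon>::real. 0 < \<epsilon> \<and> \<epsilon> \<le> 1 / real (card V) \<longrightarrow>
               zfrac V x = Fc V d (real (card V) / (real (card V) - 1) * (zfrac V x - \<epsilon>))))
       \<and> (\<forall>zs::real. (\<exists>k::nat. k \<le> card V \<and> zs = real k / real (card V)) \<and>
            (\<forall>\<epsilon>::real. 0 < \<epsilon> \<and> \<epsilon> \<le> 1 / real (card V) \<longrightarrow>
               zs = Fc V d (real (card V) / (real (card V) - 1) * (zs - \<epsilon>)))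
            \<longrightarrow> (\<exists>x. nash_eq V d x \<and> zfrac V x = zs))"
proof (intro conjI allI impI)
  let ?n = "real (card V)"
  have N: "?n - 1 > 0" "?n > 0" using assms(2) by auto
  fix x e
  assume ne: "nash_eq V d x" and e: "0 < e \<and> e \<le> 1 / ?n"
  let ?P = "{i\<in>V. x i = 1}"
  let ?m = "real (card ?P)"
  have xc: "x \<in> configs V" using ne unfolding nash_eq_def by auto
  have t: "?n / (?n - 1) * (zfrac V x - e) = (?m - ?n * e) / (?n - 1)"
    unfolding zfrac_def using N by (simp add: field_simps)
  have ne1: "?n * e \<le> 1" "?n * e > 0" using e N by (auto simp: field_simps)
  have eqs: "{i\<in>V. threshold V d i \<le> (?m - ?n * e) / (?n - 1)} = ?P"
  proof (intro equalityI subsetI)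
    fix i assume i: "i \<in> {i\<in>V. threshold V d i \<le> (?m - ?n * e) / (?n - 1)}"
    show "i \<in> ?P"
    proof (rule ccontr)
      assume "i \<notin> ?P"
      then have "x i \<noteq> 1" using i by auto
      then have "threshold V d i \<ge> ?m / (?n - 1)"
        using agent_char[OF assms xc, of i d] ne i unfolding nash_eq_def by auto
      moreover have "(?m - ?n * e) / (?n - 1) < ?m / (?n - 1)"
        using N ne1 by (simp add: divide_strict_right_mono)
      ultimately show False using i by auto
    qed
  next
    fix i assume i: "i \<in> ?P"
    then have "threshold V d i \<le> (?m - 1) / (?n - 1)"
      using agent_char[OF assms xc, of i d] ne unfolding nash_eq_def by auto
    moreover have "(?m - 1) / (?n - 1) \<le> (?m - ?n * e) / (?n - 1)"
      using N ne1 by (simp add: divide_right_mono)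
    ultimately show "i \<in> {i\<in>V. threshold V d i \<le> (?m - ?n * e) / (?n - 1)}" using i by auto
  qed
  have "Fc V d (?n / (?n - 1) * (zfrac V x - e)) = ?m / ?n"
    by (simp only: t Fc_def eqs)
  then show "zfrac V x = Fc V d (?n / (?n - 1) * (zfrac V x - e))"
    unfolding zfrac_def by simp
next
  let ?n = "real (card V)"
  have N: "?n - 1 > 0" "?n > 0" using assms(2) by auto
  fix zs
  assume h: "(\<exists>k::nat. k \<le> card V \<and> zs = real k / ?n) \<and>
            (\<forall>\<epsilon>::real. 0 < \<epsilon> \<and> \<epsilon> \<le> 1 / ?n \<longrightarrow>
               zs = Fc V d (?n / (?n - 1) * (zs - \<epsilon>)))"
  then obtain k where k: "k \<le> card V" "zs = real k / ?n" by auto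
  have key: "card {i\<in>V. threshold V d i \<le> t} = k"
    if t1: "(real k - 1) / (?n - 1) \<le> t" and t2: "t < real k / (?n - 1)" for t
  proof -
    define e where "e = (real k - (?n - 1) * t) / ?n"
    have "(?n - 1) * t < real k" using t2 N by (simp add: field_simps)
    then have e0: "0 < e" unfolding e_def using N by simp
    have "real k - 1 \<le> (?n - 1) * t" using t1 N by (simp add: field_simps)
    then have e1: "e \<le> 1 / ?n" unfolding e_def using N by (simp add: divide_right_mono)
    have tt: "?n / (?n - 1) * (zs - e) = t" unfolding k(2) e_def using N by (simp add: field_simps)
    have "zs = Fc V d t" using h e0 e1 tt by metis
    then show ?thesis unfolding Fc_def k(2) using N by (simp add: field_simps)
  qed
  define t0 where "t0 = (real k - 1) / (?n - 1)"
  have t0lt: "t0 < real k / (?n - 1)" unfolding t0_def using N by (simp add: divide_strict_right_mono)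
  let ?A = "{i\<in>V. threshold V d i \<le> t0}"
  have cA: "card ?A = k" using key[of t0] t0lt unfolding t0_def by simp
  define x where "x = (\<lambda>i. if i \<in> V then (if threshold V d i \<le> t0 then 1 else -1::real) else undefined)"
  have xc: "x \<in> configs V" unfolding configs_def x_def by (auto simp: PiE_iff extensional_def)
  have P: "{i\<in>V. x i = 1} = ?A" unfolding x_def by auto
  have gap: "threshold V d i \<ge> real k / (?n - 1)" if i: "i \<in> V" "\<not> threshold V d i \<le> t0" for i
  proof (rule ccontr)
    assume "\<not> ?thesis"
    then have "card {j\<in>V. threshold V d j \<le> threshold V d i} = k"
      using key[of "threshold V d i"] i unfolding t0_def by simp
    moreover have "insert i ?A \<subseteq> {j\<in>V. threshold V d j \<le> threshold V d i}" using i by auto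
    moreover have "card (insert i ?A) = k + 1" using cA i assms(1) by simp
    ultimately have "k + 1 \<le> k"
      by (metis (no_types, lifting) assms(1) card_mono finite_subset mem_Collect_eq subsetI)
    then show False by simp
  qed
  have "nash_eq V d x"
    unfolding nash_eq_def
  proof (intro conjI ballI)
    show "x \<in> configs V" by (rule xc)
  next
    fix i y assume i: "i \<in> V" and y: "y \<in> {-1, 1::real}"
    have "if x i = 1 then threshold V d i \<le> (real (card {i\<in>V. x i = 1}) - 1) / (?n - 1)
     else threshold V d i \<ge> real (card {i\<in>V. x i = 1}) / (?n - 1)"
      unfolding P cA using gap[OF i] i unfolding x_def t0_def by (cases "threshold V d i \<le> t0") auto
    then show "utility V d i x \<ge> utility V d i (x(i := y))"
      using agent_char[OF assms xc i, of d] y by blast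
  qed
  moreover have "zfrac V x = zs" unfolding zfrac_def P cA k(2) ..
  ultimately show "\<exists>x. nash_eq V d x \<and> zfrac V x = zs" by blast
qed

end
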